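(* Let $P$ be a graded poset and $\sim$ a Reiner–Stamate equivalence relation on $\operatorname{Int}(P)$. Then the projection functor $\pi:P\to P/\sim$, $a\mapsto[a]$, $f\mapsto[f]$, is an almost discrete fibration such that every morphism of $P/\sim$ has a lift in $P$.
   Context: A graded poset has a rank function $\rho$ with $\rho(b)=\rho(a)+1$ when $b$ covers $a$; it is regarded as a category with a unique morphism $a\to b$ iff $a\le b$. $\operatorname{Int}(P)$ is the set of closed intervals $[a,b]$, $a\le b$, identified with the morphisms $a\le b$. An equivalence relation $\sim$ on $\operatorname{Int}(P)$ is Reiner–Stamate if: (A1) $[a,b]\sim[a',b']$ and $[b,c]\sim[b',c']$ imply $[a,c]\sim[a',c']$; (A2) with $\mathrm{int}_{[a,b]}:[a,b]\to(\operatorname{Int}(P)/\sim)^2$, $c\mapsto(\widetilde{[a,c]},\widetilde{[c,b]})$, whenever $[a,b]\sim[a',b']$ there is a unique map $\tau:[a,b]\to[a',b']$ with $\mathrm{int}_{[a',b']}\circ\tau=\mathrm{int}_{[a,b]}$; (A4) writing $x\sim y$ for $[x,x]\sim[y,y]$, if $a\le b_1$, $b_2\le c$, $b_1\sim b_2$, there exist $a'\le b'\le c'$ with $[a,b_1]\sim[a',b']$ and $[b_2,c]\sim[b',c']$. The quotient category $P/\sim$ has objects the classes $[a]$ of elements of $P$ under $x\sim y$, morphisms the classes $[a\le b]$ of intervals, and composition $[b_2\le c]\circ[a\le b_1]=[a'\le c']$ for $a'\le b'\le c'$ as in (A4); it is an indiscretely based category. A factorization $q=g_0\circ\cdots\circ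 g_{n+1}$ ($n\ge0$) is nontrivial if no $g_i$ is an isomorphism. A functor $F:\mathcal C\to\mathcal D$ is an almost discrete fibration if for every morphism $q$ of $\mathcal D$, every $p$ with $F(p)=q$ and every nontrivial factorization $q=g_0\circ\cdots\circ g_{n+1}$ there is a nontrivial factorization $p=f_0\circ\cdots\circ f_{n+1}$ with $F(f_i)=g_i$, unique up to $(f_i)\sim(f'_i)$ iff there are isomorphisms $h_0,\dots,h_n$ with $f'_0=f_0\circ h_0$, $f'_i=h_{i-1}^{-1}\circ f_i\circ h_i$ ($1\le i\le n$), $f'_{n+1}=h_n^{-1}\circ f_{n+1}$. *)

theory Defs
  imports Main "HOL-Library.FuncSet"
begin

record ('o, 'm) cat =
  Ob   :: "'o set"
  Mor  :: "'m set"
  Dom  :: "'m \<Rightarrow> 'o"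
  Cod  :: "'m \<Rightarrow> 'o"
  Comp :: "'m \<Rightarrow> 'm \<Rightarrow> 'm"   (* Comp C g f = g \<circ> f *)
  Id   :: "'o \<Rightarrow> 'm"

definition cat_iso :: "('o, 'm, 'x) cat_scheme \<Rightarrow> 'm \<Rightarrow> bool" where
  "cat_iso C f \<longleftrightarrow> f \<in> Mor C \<and>
     (\<exists>g\<in>Mor C. Dom C g = Cod C f \<and> Cod C g = Dom C f \<and>
        Comp C g f = Id C (Dom C f) \<and> Comp C f g = Id C (Cod C f))"

definition cat_inv :: "('o, 'm, 'x) cat_scheme \<Rightarrow> 'm \<Rightarrow> 'm" where
  "cat_inv C f = (THE g. g \<in> Mor C \<and> Dom C g = Cod C f \<and> Cod C g = Dom C f \<and>
        Comp C g f = Id C (Dom C f) \<and> Comp C f g = Id C (Cod C f))"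

fun lcomp :: "('o, 'm, 'x) cat_scheme \<Rightarrow> 'm list \<Rightarrow> 'm" where
  "lcomp C [] = undefined"
| "lcomp C [g] = g"
| "lcomp C (g # h # gs) = Comp C g (lcomp C (h # gs))"

text \<open>A factorization q = g0 \<circ> ... \<circ> g(n+1), n \<ge> 0, given as the list [g0,...,g(n+1)].\<close>
definition is_factorization :: "('o, 'm, 'x) cat_scheme \<Rightarrow> 'm \<Rightarrow> 'm list \<Rightarrow> bool" where
  "is_factorization C q gs \<longleftrightarrow> length gs \<ge> 2 \<and> set gs \<subseteq> Mor C \<and>
     (\<forall>i. Suc i < length gs \<longrightarrow> Dom C (gs ! i) = Cod C (gs ! Suc i)) \<and>
     lcomp C gs = q"

definition nontrivial_fact :: "('o, 'm, 'x) cat_scheme \<Rightarrow> 'm list \<Rightarrow> bool" where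
  "nontrivial_fact C gs \<longleftrightarrow> (\<forall>g\<in>set gs. \<not> cat_iso C g)"

definition fact_equiv :: "('o, 'm, 'x) cat_scheme \<Rightarrow> 'm list \<Rightarrow> 'm list \<Rightarrow> bool" where
  "fact_equiv C fs fs' \<longleftrightarrow> length fs' = length fs \<and>
     (\<exists>hs. length hs + 1 = length fs \<and>
        (\<forall>i < length hs. cat_iso C (hs ! i) \<and> Cod C (hs ! i) = Dom C (fs ! i)) \<and>
        fs' ! 0 = Comp C (fs ! 0) (hs ! 0) \<and>
        (\<forall>i. 1 \<le> i \<and> i < length hs \<longrightarrow>
            fs' ! i = Comp C (cat_inv C (hs ! (i - 1))) (Comp C (fs ! i) (hs ! i))) \<and>
        fs' ! length hs = Comp C (cat_inv C (hs ! (length hs - 1))) (fs ! length hs))"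

definition is_functor ::
  "('o, 'm, 'x) cat_scheme \<Rightarrow> ('p, 'n, 'y) cat_scheme \<Rightarrow> ('o \<Rightarrow> 'p) \<Rightarrow> ('m \<Rightarrow> 'n) \<Rightarrow> bool" where
  "is_functor C D Fo Fm \<longleftrightarrow>
     (\<forall>x\<in>Ob C. Fo x \<in> Ob D) \<and>
     (\<forall>f\<in>Mor C. Fm f \<in> Mor D \<and> Dom D (Fm f) = Fo (Dom C f) \<and> Cod D (Fm f) = Fo (Cod C f)) \<and>
     (\<forall>f\<in>Mor C. \<forall>g\<in>Mor C. Dom C g = Cod C f \<longrightarrow> Fm (Comp C g f) = Comp D (Fm g) (Fm f)) \<and>
     (\<forall>x\<in>Ob C. Fm (Id C x) = Id D (Fo x))"

definition almost_discrete_fibration ::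
  "('o, 'm, 'x) cat_scheme \<Rightarrow> ('p, 'n, 'y) cat_scheme \<Rightarrow> ('o \<Rightarrow> 'p) \<Rightarrow> ('m \<Rightarrow> 'n) \<Rightarrow> bool" where
  "almost_discrete_fibration C D Fo Fm \<longleftrightarrow> is_functor C D Fo Fm \<and>
     (\<forall>q\<in>Mor D. \<forall>p\<in>Mor C. Fm p = q \<longrightarrow>
        (\<forall>gs. is_factorization D q gs \<and> nontrivial_fact D gs \<longrightarrow>
           (\<exists>fs. is_factorization C p fs \<and> nontrivial_fact C fs \<and> map Fm fs = gs) \<and>
           (\<forall>fs fs'. is_factorization C p fs \<and> nontrivial_fact C fs \<and> map Fm fs = gs \<and>
                     is_factorization C p fs' \<and> nontrivial_fact C fs' \<and> map Fm fs' = gs \<longrightarrow>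
                     fact_equiv C fs fs')))"

text \<open>The poset P is the whole type 'a (class order).\<close>

definition covers :: "'a::order \<Rightarrow> 'a \<Rightarrow> bool" where
  "covers b a \<longleftrightarrow> a < b \<and> \<not> (\<exists>c. a < c \<and> c < b)"

definition graded_by :: "('a::order \<Rightarrow> nat) \<Rightarrow> bool" where
  "graded_by \<rho> \<longleftrightarrow> (\<forall>a b. covers b a \<longrightarrow> \<rho> b = \<rho> a + 1)"

definition Intv :: "('a::order \<times> 'a) set" where
  "Intv = {(a, b). a \<le> b}"

definition elem_sim :: "(('a \<times> 'a) \<times> ('a \<times> 'a)) set \<Rightarrow> 'a \<Rightarrow> 'a \<Rightarrow> bool" where
  "elem_sim R x y \<longleftrightarrow> ((x, x), (y, y)) \<in> R"

definition int_map :: "(('a \<times> 'a) \<times> ('a \<times> 'a)) set \<Rightarrow> 'a \<Rightarrow> 'a \<Rightarrow> 'a \<Rightarrow> ('a \<times> 'a) set \<times> ('a \<times> 'a) set" where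
  "int_map R a b c = (R `` {(a, c)}, R `` {(c, b)})"

definition reiner_stamate :: "(('a::order \<times> 'a) \<times> ('a \<times> 'a)) set \<Rightarrow> bool" where
  "reiner_stamate R \<longleftrightarrow> equiv Intv R \<and>
     \<comment> \<open>(A1)\<close>
     (\<forall>a b c a' b' c'. ((a, b), (a', b')) \<in> R \<and> ((b, c), (b', c')) \<in> R \<longrightarrow> ((a, c), (a', c')) \<in> R) \<and>
     \<comment> \<open>(A2)\<close>
     (\<forall>a b a' b'. ((a, b), (a', b')) \<in> R \<longrightarrow>
        (\<exists>!\<tau>. \<tau> \<in> {a..b} \<rightarrow>\<^sub>E {a'..b'} \<and> (\<forall>c\<in>{a..b}. int_map R a' b' (\<tau> c) = int_map R a b c))) \<and>
     \<comment> \<open>(A4)\<close>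
     (\<forall>a b1 b2 c. a \<le> b1 \<and> b2 \<le> c \<and> elem_sim R b1 b2 \<longrightarrow>
        (\<exists>a' b' c'. a' \<le> b' \<and> b' \<le> c' \<and> ((a, b1), (a', b')) \<in> R \<and> ((b2, c), (b', c')) \<in> R))"

definition poset_cat :: "('a::order, 'a \<times> 'a) cat" where
  "poset_cat = \<lparr> Ob = UNIV, Mor = Intv, Dom = fst, Cod = snd,
                 Comp = (\<lambda>g f. (fst f, snd g)), Id = (\<lambda>a. (a, a)) \<rparr>"

definition obj_cls :: "(('a \<times> 'a) \<times> ('a \<times> 'a)) set \<Rightarrow> 'a \<Rightarrow> 'a set" where
  "obj_cls R x = {y. elem_sim R x y}"

definition rep :: "('a \<times> 'a) set \<Rightarrow> 'a \<times> 'a" where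
  "rep M = (SOME p. p \<in> M)"

definition quot_cat :: "(('a::order \<times> 'a) \<times> ('a \<times> 'a)) set \<Rightarrow> ('a set, ('a \<times> 'a) set) cat" where
  "quot_cat R = \<lparr>
     Ob = range (obj_cls R),
     Mor = {R `` {(a, b)} | a b. a \<le> b},
     Dom = (\<lambda>M. obj_cls R (fst (rep M))),
     Cod = (\<lambda>M. obj_cls R (snd (rep M))),
     Comp = (\<lambda>M2 M1. THE M. \<exists>a b1 b2 c a' b' c'.
               M1 = R `` {(a, b1)} \<and> M2 = R `` {(b2, c)} \<and> a \<le> b1 \<and> b2 \<le> c \<and>
               elem_sim R b1 b2 \<and> a' \<le> b' \<and> b' \<le> c' \<and>
               ((a, b1), (a', b')) \<in> R \<and> ((b2, c), (b', c')) \<in> R \<and> M = R `` {(a', c')}),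
     Id = (\<lambda>X. R `` {(a, a) | a. obj_cls R a = X}) \<rparr>"

end

theory Submission
  imports Defs
begin

fun chainC :: "('o, 'm, 'x) cat_scheme \<Rightarrow> 'm list \<Rightarrow> bool" where
  "chainC C (g # h # gs) = (Dom C g = Cod C h \<and> chainC C (h # gs))"
| "chainC C _ = True"

lemma chain_iff: "(\<forall>i. Suc i < length gs \<longrightarrow> Dom C (gs ! i) = Cod C (gs ! Suc i)) \<longleftrightarrow> chainC C gs"
proof (induction C gs rule: chainC.induct)
  case (1 C g h gs)
  show ?case
  proof
    assume A: "\<forall>i. Suc i < length (g # h # gs) \<longrightarrow> Dom C ((g # h # gs) ! i) = Cod C ((g # h # gs) ! Suc i)"
    have "Dom C g = Cod C h" using A[rule_format, of 0] by simp
    moreover have "\<forall>i. Suc i < length (h # gs) \<longrightarrow> Dom C ((h # gs) ! i) = Cod C ((h # gs) ! Suc i)"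
    proof (intro allI impI)
      fix i assume "Suc i < length (h # gs)"
      then show "Dom C ((h # gs) ! i) = Cod C ((h # gs) ! Suc i)" using A[rule_format, of "Suc i"] by simp
    qed
    ultimately show "chainC C (g # h # gs)" using 1 by simp
  next
    assume B: "chainC C (g # h # gs)"
    show "\<forall>i. Suc i < length (g # h # gs) \<longrightarrow> Dom C ((g # h # gs) ! i) = Cod C ((g # h # gs) ! Suc i)"
    proof (intro allI impI)
      fix i assume i: "Suc i < length (g # h # gs)"
      show "Dom C ((g # h # gs) ! i) = Cod C ((g # h # gs) ! Suc i)"
      proof (cases i)
        case 0 then show ?thesis using B by simp
      next
        case (Suc j)
        then have "Suc j < length (h # gs)" using i by simp
        then show ?thesis using B 1 Suc by simp
      qed
    qed
  qed
qed auto

lemma PC: "Ob poset_cat = UNIV" "Mor poset_cat = Intv" "Dom poset_cat = fst" "Cod poset_cat = snd"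
  "Comp poset_cat = (\<lambda>g f. (fst f, snd g))" "Id poset_cat = (\<lambda>a. (a, a))"
  by (simp_all add: poset_cat_def)

lemma iso_P: "cat_iso poset_cat f \<longleftrightarrow> f \<in> Intv \<and> fst f = snd f"
proof
  assume "cat_iso poset_cat f"
  then obtain g where "f \<in> Intv" "g \<in> Intv" "fst g = snd f" "snd g = fst f"
    unfolding cat_iso_def PC by blast
  then show "f \<in> Intv \<and> fst f = snd f" unfolding Intv_def by auto
next
  assume "f \<in> Intv \<and> fst f = snd f"
  then show "cat_iso poset_cat f" unfolding cat_iso_def PC by (intro conjI bexI[of _ f]) auto
qed

lemma inv_P: "cat_inv poset_cat (x, x) = (x, x)"
  unfolding cat_inv_def PC by (rule the_equality) (auto simp: Intv_def)

lemma lcomp_P: "fs \<noteq> [] \<Longrightarrow> set fs \<subseteq> Intv \<Longrightarrow> chainC poset_cat fs \<Longrightarrow>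
   lcomp poset_cat fs \<in> Intv \<and> fst (lcomp poset_cat fs) = fst (last fs) \<and> snd (lcomp poset_cat fs) = snd (hd fs)"
proof (induction fs)
  case Nil then show ?case by simp
next
  case (Cons g rest)
  show ?case
  proof (cases rest)
    case Nil then show ?thesis using Cons.prems by simp
  next
    case (Cons h gs)
    have ih: "lcomp poset_cat rest \<in> Intv \<and> fst (lcomp poset_cat rest) = fst (last rest) \<and>
        snd (lcomp poset_cat rest) = snd (hd rest)"
      using Cons.IH Cons.prems \<open>rest = h # gs\<close> by simp
    have ch: "fst g = snd h" using Cons.prems \<open>rest = h # gs\<close> by (simp add: PC)
    have g: "g \<in> Intv" using Cons.prems by simp
    have e: "lcomp poset_cat (g # rest) = (fst (lcomp poset_cat rest), snd g)"
      using \<open>rest = h # gs\<close> by (simp add: PC)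
    have "fst (lcomp poset_cat rest) \<le> snd (lcomp poset_cat rest)" using ih unfolding Intv_def by auto
    moreover have "fst g \<le> snd g" using g unfolding Intv_def by auto
    ultimately have "fst (lcomp poset_cat rest) \<le> snd g" using ih ch \<open>rest = h # gs\<close> by auto
    then show ?thesis using e ih \<open>rest = h # gs\<close> unfolding Intv_def by simp
  qed
qed

context
  fixes R :: "(('a::order \<times> 'a) \<times> ('a \<times> 'a)) set"
  assumes RS: "reiner_stamate R"
begin

lemma EQ: "equiv Intv R" using RS unfolding reiner_stamate_def by blast

lemma A1: "((a, b), (a', b')) \<in> R \<Longrightarrow> ((b, c), (b', c')) \<in> R \<Longrightarrow> ((a, c), (a', c')) \<in> R"
  using conjunct1[OF conjunct2[OF RS[unfolded reiner_stamate_def]]] by blast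

lemma A2: "((a, b), (a', b')) \<in> R \<Longrightarrow>
   (\<exists>!\<tau>. \<tau> \<in> {a..b} \<rightarrow>\<^sub>E {a'..b'} \<and> (\<forall>c\<in>{a..b}. int_map R a' b' (\<tau> c) = int_map R a b c))"
  using conjunct1[OF conjunct2[OF conjunct2[OF RS[unfolded reiner_stamate_def]]]] by blast

lemma A4: "a \<le> b1 \<Longrightarrow> b2 \<le> c \<Longrightarrow> elem_sim R b1 b2 \<Longrightarrow>
        (\<exists>a' b' c'. a' \<le> b' \<and> b' \<le> c' \<and> ((a, b1), (a', b')) \<in> R \<and> ((b2, c), (b', c')) \<in> R)"
  using conjunct2[OF conjunct2[OF conjunct2[OF RS[unfolded reiner_stamate_def]]]] by blast

lemma Rsub: "(p, q) \<in> R \<Longrightarrow> p \<in> Intv \<and> q \<in> Intv"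
  using equiv_type[OF EQ] by blast

lemma Rle: "((a, b), (c, d)) \<in> R \<Longrightarrow> a \<le> b \<and> c \<le> d"
  using Rsub unfolding Intv_def by blast

lemma Rrefl: "a \<le> b \<Longrightarrow> ((a, b), (a, b)) \<in> R"
  using EQ unfolding equiv_def refl_on_def Intv_def by blast

lemma Rsym: "(p, q) \<in> R \<Longrightarrow> (q, p) \<in> R"
  using EQ unfolding equiv_def by (meson symD)

lemma Rtrans: "(p, q) \<in> R \<Longrightarrow> (q, r) \<in> R \<Longrightarrow> (p, r) \<in> R"
  using EQ unfolding equiv_def by (meson transD)

lemma cls_eq: "a \<le> b \<Longrightarrow> c \<le> d \<Longrightarrow> R `` {(a, b)} = R `` {(c, d)} \<longleftrightarrow> ((a, b), (c, d)) \<in> R"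
  using eq_equiv_class_iff[OF EQ] unfolding Intv_def by blast

lemma cls_eq2: "a \<le> b \<Longrightarrow> R `` {(a, b)} = R `` {(c, d)} \<Longrightarrow> ((a, b), (c, d)) \<in> R"
proof -
  assume ab: "a \<le> b" and e: "R `` {(a, b)} = R `` {(c, d)}"
  have "(a, b) \<in> R `` {(a, b)}" using Rrefl[OF ab] Rsym by blast
  then have "((c, d), (a, b)) \<in> R" using e by blast
  then show ?thesis using Rsym by blast
qed

lemma L1: "((x, y), (z, z)) \<in> R \<Longrightarrow> x = y"
proof -
  assume h: "((x, y), (z, z)) \<in> R"
  have xy: "x \<le> y" using Rle[OF h] by blast
  obtain t2 where t2: "t2 \<in> {x..y} \<rightarrow>\<^sub>E {z..z}" "\<forall>c\<in>{x..y}. int_map R z z (t2 c) = int_map R x y c"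
    using A2[OF h] by blast
  obtain t1 where t1: "t1 \<in> {z..z} \<rightarrow>\<^sub>E {x..y}" "\<forall>c\<in>{z..z}. int_map R x y (t1 c) = int_map R z z c"
    using A2[OF Rsym[OF h]] by blast
  define s where "s = restrict (t1 \<circ> t2) {x..y}"
  define i where "i = restrict id {x..y}"
  have s1: "s \<in> {x..y} \<rightarrow>\<^sub>E {x..y}" using t1 t2 unfolding s_def by auto
  have s2: "\<forall>c\<in>{x..y}. int_map R x y (s c) = int_map R x y c"
  proof
    fix c assume c: "c \<in> {x..y}"
    have "t2 c \<in> {z..z}" using t2 c by auto
    then show "int_map R x y (s c) = int_map R x y c" using t1 t2 c unfolding s_def by auto
  qed
  have i1: "i \<in> {x..y} \<rightarrow>\<^sub>E {x..y}" "\<forall>c\<in>{x..y}. int_map R x y (i c) = int_map R x y c"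
    unfolding i_def by auto
  have "s = i" using A2[OF Rrefl[OF xy]] s1 s2 i1 by blast
  then have e: "\<And>c. c \<in> {x..y} \<Longrightarrow> t1 (t2 c) = c" unfolding s_def i_def
    by (metis comp_apply id_apply restrict_apply')
  have "\<And>c. c \<in> {x..y} \<Longrightarrow> t2 c = z" using t2 by auto
  then have "t1 z = x" "t1 z = y" using e[of x] e[of y] xy by auto
  then show ?thesis by simp
qed

lemma L2: "a \<le> c \<Longrightarrow> c \<le> b \<Longrightarrow> a \<le> c' \<Longrightarrow> c' \<le> b \<Longrightarrow>
  R `` {(a, c)} = R `` {(a, c')} \<Longrightarrow> R `` {(c, b)} = R `` {(c', b)} \<Longrightarrow> c = c'"
proof -
  assume h: "a \<le> c" "c \<le> b" "a \<le> c'" "c' \<le> b" "R `` {(a, c)} = R `` {(a, c')}" "R `` {(c, b)} = R `` {(c', b)}"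
  have ab: "a \<le> b" using h order_trans by blast
  define sw where "sw = restrict (\<lambda>d. if d = c then c' else if d = c' then c else d) {a..b}"
  define i where "i = restrict id {a..b}"
  have "sw \<in> {a..b} \<rightarrow>\<^sub>E {a..b}" "\<forall>d\<in>{a..b}. int_map R a b (sw d) = int_map R a b d"
    using h unfolding sw_def int_map_def by auto
  moreover have "i \<in> {a..b} \<rightarrow>\<^sub>E {a..b}" "\<forall>d\<in>{a..b}. int_map R a b (i d) = int_map R a b d"
    unfolding i_def by auto
  ultimately have "sw = i" using A2[OF Rrefl[OF ab]] by blast
  then have "sw c = i c" by simp
  then show ?thesis using h unfolding sw_def i_def by auto
qed

lemma EL: "((a, b), (a', b')) \<in> R \<Longrightarrow> elem_sim R a a' \<and> elem_sim R b b'"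
proof -
  assume h: "((a, b), (a', b')) \<in> R"
  have ab: "a \<le> b" using Rle[OF h] by blast
  obtain t where t: "t \<in> {a..b} \<rightarrow>\<^sub>E {a'..b'}" "\<forall>c\<in>{a..b}. int_map R a' b' (t c) = int_map R a b c"
    using A2[OF h] by blast
  have "R `` {(a', t a)} = R `` {(a, a)}" using t(2) ab unfolding int_map_def by auto
  then have "((a, a), (a', t a)) \<in> R" using cls_eq2[of a a] by auto
  then have e1: "t a = a'" using L1[OF Rsym] by metis
  have "R `` {(t b, b')} = R `` {(b, b)}" using t(2) ab unfolding int_map_def by auto
  then have "((b, b), (t b, b')) \<in> R" using cls_eq2[of b b] by auto
  then have e2: "t b = b'" using L1[OF Rsym] by metis
  show ?thesis unfolding elem_sim_def
    using \<open>((a, a), (a', t a)) \<in> R\<close> \<open>((b, b), (t b, b')) \<in> R\<close> e1 e2 by simp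
qed

lemma es_refl: "elem_sim R x x" unfolding elem_sim_def using Rrefl by auto

lemma es_sym: "elem_sim R x y \<Longrightarrow> elem_sim R y x" unfolding elem_sim_def using Rsym by auto

lemma es_trans: "elem_sim R x y \<Longrightarrow> elem_sim R y z \<Longrightarrow> elem_sim R x z"
  unfolding elem_sim_def using Rtrans by blast

lemma oc_eq: "obj_cls R x = obj_cls R y \<longleftrightarrow> elem_sim R x y"
  unfolding obj_cls_def using es_refl es_sym es_trans by blast

lemma rep_in: "a \<le> b \<Longrightarrow> ((a, b), rep (R `` {(a, b)})) \<in> R"
proof -
  assume "a \<le> b"
  then have "(a, b) \<in> R `` {(a, b)}" using Rrefl by auto
  then have "rep (R `` {(a, b)}) \<in> R `` {(a, b)}" unfolding rep_def by (metis someI_ex)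
  then show ?thesis by auto
qed

lemma Dom_cls: "a \<le> b \<Longrightarrow> Dom (quot_cat R) (R `` {(a, b)}) = obj_cls R a"
proof -
  assume ab: "a \<le> b"
  obtain x y where r: "rep (R `` {(a, b)}) = (x, y)" by fastforce
  have "elem_sim R a x" using EL rep_in[OF ab] r by metis
  then have "obj_cls R x = obj_cls R a" using oc_eq es_sym by blast
  then show ?thesis unfolding quot_cat_def using r by simp
qed

lemma Cod_cls: "a \<le> b \<Longrightarrow> Cod (quot_cat R) (R `` {(a, b)}) = obj_cls R b"
proof -
  assume ab: "a \<le> b"
  obtain x y where r: "rep (R `` {(a, b)}) = (x, y)" by fastforce
  have "elem_sim R b y" using EL rep_in[OF ab] r by metis
  then have "obj_cls R y = obj_cls R b" using oc_eq es_sym by blast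
  then show ?thesis unfolding quot_cat_def using r by simp
qed

lemma CompL: "a \<le> b1 \<Longrightarrow> b2 \<le> c \<Longrightarrow> elem_sim R b1 b2 \<Longrightarrow> a' \<le> b' \<Longrightarrow> b' \<le> c' \<Longrightarrow>
  ((a, b1), (a', b')) \<in> R \<Longrightarrow> ((b2, c), (b', c')) \<in> R \<Longrightarrow>
  Comp (quot_cat R) (R `` {(b2, c)}) (R `` {(a, b1)}) = R `` {(a', c')}"
proof -
  assume h: "a \<le> b1" "b2 \<le> c" "elem_sim R b1 b2" "a' \<le> b'" "b' \<le> c'"
    "((a, b1), (a', b')) \<in> R" "((b2, c), (b', c')) \<in> R"
  show ?thesis unfolding quot_cat_def cat.simps
  proof (rule the_equality)
    show "\<exists>a0 b1a b2a c0 a'a b'a c'a.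
       R `` {(a, b1)} = R `` {(a0, b1a)} \<and> R `` {(b2, c)} = R `` {(b2a, c0)} \<and> a0 \<le> b1a \<and> b2a \<le> c0 \<and>
       elem_sim R b1a b2a \<and> a'a \<le> b'a \<and> b'a \<le> c'a \<and>
       ((a0, b1a), a'a, b'a) \<in> R \<and> ((b2a, c0), b'a, c'a) \<in> R \<and> R `` {(a', c')} = R `` {(a'a, c'a)}"
      apply (rule exI[where x=a], rule exI[where x=b1], rule exI[where x=b2], rule exI[where x=c],
        rule exI[where x=a'], rule exI[where x=b'], rule exI[where x=c'])
      using h by simp
  next
    fix M assume "\<exists>a0 b1a b2a c0 a'a b'a c'a.
       R `` {(a, b1)} = R `` {(a0, b1a)} \<and> R `` {(b2, c)} = R `` {(b2a, c0)} \<and> a0 \<le> b1a \<and> b2a \<le> c0 \<and>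
       elem_sim R b1a b2a \<and> a'a \<le> b'a \<and> b'a \<le> c'a \<and>
       ((a0, b1a), a'a, b'a) \<in> R \<and> ((b2a, c0), b'a, c'a) \<in> R \<and> M = R `` {(a'a, c'a)}"
    then obtain a0 b1a b2a c0 a'a b'a c'a where w:
      "R `` {(a, b1)} = R `` {(a0, b1a)}" "R `` {(b2, c)} = R `` {(b2a, c0)}" "a0 \<le> b1a" "b2a \<le> c0"
       "a'a \<le> b'a" "b'a \<le> c'a"
       "((a0, b1a), a'a, b'a) \<in> R" "((b2a, c0), b'a, c'a) \<in> R" "M = R `` {(a'a, c'a)}" by blast
    have r1: "((a', b'), (a'a, b'a)) \<in> R"
      using cls_eq2[OF h(1) w(1)] h(6) w(7) Rsym Rtrans by blast
    have r2: "((b', c'), (b'a, c'a)) \<in> R"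
      using cls_eq2[OF h(2) w(2)] h(7) w(8) Rsym Rtrans by blast
    have "((a', c'), (a'a, c'a)) \<in> R" using A1[OF r1 r2] .
    moreover have "a' \<le> c'" using h order_trans by blast
    moreover have "a'a \<le> c'a" using w order_trans by blast
    ultimately have "R `` {(a', c')} = R `` {(a'a, c'a)}" using cls_eq by blast
    then show "M = R `` {(a', c')}" using w(9) by simp
  qed
qed

lemma Comp_poset: "a \<le> b \<Longrightarrow> b \<le> c \<Longrightarrow>
   Comp (quot_cat R) (R `` {(b, c)}) (R `` {(a, b)}) = R `` {(a, c)}"
  using CompL[of a b b c a b c] es_refl Rrefl by blast

lemma MorD: "M \<in> Mor (quot_cat R) \<longleftrightarrow> (\<exists>a b. a \<le> b \<and> M = R `` {(a, b)})"
  unfolding quot_cat_def by auto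

lemma CompD: "M1 \<in> Mor (quot_cat R) \<Longrightarrow> M2 \<in> Mor (quot_cat R) \<Longrightarrow>
  Dom (quot_cat R) M2 = Cod (quot_cat R) M1 \<Longrightarrow>
  \<exists>a' b' c'. a' \<le> b' \<and> b' \<le> c' \<and> M1 = R `` {(a', b')} \<and> M2 = R `` {(b', c')} \<and>
     Comp (quot_cat R) M2 M1 = R `` {(a', c')}"
proof -
  assume m1: "M1 \<in> Mor (quot_cat R)" and m2: "M2 \<in> Mor (quot_cat R)"
    and d: "Dom (quot_cat R) M2 = Cod (quot_cat R) M1"
  obtain a b1 where ab: "a \<le> b1" "M1 = R `` {(a, b1)}" using m1 MorD by blast
  obtain b2 c where bc: "b2 \<le> c" "M2 = R `` {(b2, c)}" using m2 MorD by blast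
  have "obj_cls R b2 = obj_cls R b1" using d Dom_cls[OF bc(1)] Cod_cls[OF ab(1)] ab(2) bc(2) by simp
  then have es: "elem_sim R b1 b2" using oc_eq es_sym by blast
  obtain a' b' c' where w: "a' \<le> b'" "b' \<le> c'" "((a, b1), (a', b')) \<in> R" "((b2, c), (b', c')) \<in> R"
    using A4[OF ab(1) bc(1) es] by blast
  have "M1 = R `` {(a', b')}" using cls_eq[OF ab(1) w(1)] w(3) ab(2) by simp
  moreover have "M2 = R `` {(b', c')}" using cls_eq[OF bc(1) w(2)] w(4) bc(2) by simp
  moreover have "Comp (quot_cat R) M2 M1 = R `` {(a', c')}"
    using CompL[OF ab(1) bc(1) es w(1) w(2) w(3) w(4)] ab bc by simp
  ultimately show ?thesis using w by blast
qed

lemma IdL: "Id (quot_cat R) (obj_cls R x) = R `` {(x, x)}"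
proof -
  have key: "\<And>a. obj_cls R a = obj_cls R x \<Longrightarrow> R `` {(a, a)} = R `` {(x, x)}"
  proof -
    fix a assume "obj_cls R a = obj_cls R x"
    then have "((a, a), (x, x)) \<in> R" using oc_eq unfolding elem_sim_def by blast
    then show "R `` {(a, a)} = R `` {(x, x)}" using cls_eq[of a a x x] by simp
  qed
  have "R `` {(a, a) | a. obj_cls R a = obj_cls R x} = R `` {(x, x)}"
  proof (rule equalityI)
    show "R `` {(a, a) | a. obj_cls R a = obj_cls R x} \<subseteq> R `` {(x, x)}"
    proof
      fix y assume "y \<in> R `` {(a, a) | a. obj_cls R a = obj_cls R x}"
      then obtain a where "obj_cls R a = obj_cls R x" "((a, a), y) \<in> R" by blast
      then show "y \<in> R `` {(x, x)}" using key by blast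
    qed
    show "R `` {(x, x)} \<subseteq> R `` {(a, a) | a. obj_cls R a = obj_cls R x}" by blast
  qed
  then show ?thesis unfolding quot_cat_def by simp
qed

lemma iso_D: "cat_iso (quot_cat R) (R `` {(x, x)})"
proof -
  have m: "R `` {(x, x)} \<in> Mor (quot_cat R)" using MorD by blast
  have c: "Comp (quot_cat R) (R `` {(x, x)}) (R `` {(x, x)}) = R `` {(x, x)}" using Comp_poset by blast
  have i: "Id (quot_cat R) (Dom (quot_cat R) (R `` {(x, x)})) = R `` {(x, x)}"
    using Dom_cls[of x x] IdL by simp
  have i2: "Id (quot_cat R) (Cod (quot_cat R) (R `` {(x, x)})) = R `` {(x, x)}"
    using Cod_cls[of x x] IdL by simp
  have dc: "Dom (quot_cat R) (R `` {(x, x)}) = Cod (quot_cat R) (R `` {(x, x)})"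
    using Dom_cls[of x x] Cod_cls[of x x] by simp
  show ?thesis unfolding cat_iso_def using m c i i2 dc
    by (intro conjI bexI[of _ "R `` {(x, x)}"]) simp_all
qed

lemma noniso: "f \<in> Intv \<Longrightarrow> \<not> cat_iso (quot_cat R) (R `` {f}) \<Longrightarrow> \<not> cat_iso poset_cat f"
  using iso_P iso_D by (metis prod.collapse)

lemma lcompD: "gs \<noteq> [] \<Longrightarrow> set gs \<subseteq> Mor (quot_cat R) \<Longrightarrow> chainC (quot_cat R) gs \<Longrightarrow>
   lcomp (quot_cat R) gs \<in> Mor (quot_cat R) \<and> Cod (quot_cat R) (lcomp (quot_cat R) gs) = Cod (quot_cat R) (hd gs)"
proof (induction gs)
  case Nil then show ?case by simp
next
  case (Cons g rest)
  show ?case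
  proof (cases rest)
    case Nil then show ?thesis using Cons.prems by simp
  next
    case (Cons h gs)
    have ih: "lcomp (quot_cat R) rest \<in> Mor (quot_cat R) \<and>
        Cod (quot_cat R) (lcomp (quot_cat R) rest) = Cod (quot_cat R) (hd rest)"
      using Cons.IH Cons.prems \<open>rest = h # gs\<close> by simp
    have ch: "Dom (quot_cat R) g = Cod (quot_cat R) (lcomp (quot_cat R) rest)"
      using Cons.prems \<open>rest = h # gs\<close> ih by simp
    have g: "g \<in> Mor (quot_cat R)" using Cons.prems by simp
    obtain a' b' c' where w: "a' \<le> b'" "b' \<le> c'" "lcomp (quot_cat R) rest = R `` {(a', b')}"
      "g = R `` {(b', c')}" "Comp (quot_cat R) g (lcomp (quot_cat R) rest) = R `` {(a', c')}"
      using CompD[OF conjunct1[OF ih] g ch] by blast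
    have e: "lcomp (quot_cat R) (g # rest) = R `` {(a', c')}"
      using \<open>rest = h # gs\<close> w(5) by simp
    have "a' \<le> c'" using w order_trans by blast
    then show ?thesis using e w Cod_cls MorD by auto
  qed
qed

lemma Fm_list: "fs \<noteq> [] \<Longrightarrow> set fs \<subseteq> Intv \<Longrightarrow> chainC poset_cat fs \<Longrightarrow>
   R `` {lcomp poset_cat fs} = lcomp (quot_cat R) (map (\<lambda>f. R `` {f}) fs)"
proof (induction fs)
  case Nil then show ?case by simp
next
  case (Cons g rest)
  show ?case
  proof (cases rest)
    case Nil then show ?thesis by simp
  next
    case (Cons h gs)
    have ih: "R `` {lcomp poset_cat rest} = lcomp (quot_cat R) (map (\<lambda>f. R `` {f}) rest)"
      using Cons.IH Cons.prems \<open>rest = h # gs\<close> by simp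
    have L: "lcomp poset_cat rest \<in> Intv \<and> snd (lcomp poset_cat rest) = snd h"
      using lcomp_P[of rest] Cons.prems \<open>rest = h # gs\<close> by simp
    have ch: "fst g = snd h" using Cons.prems \<open>rest = h # gs\<close> by (simp add: PC)
    have g: "g \<in> Intv" using Cons.prems by simp
    obtain a where a: "lcomp poset_cat rest = (a, fst g)" using L ch by (metis prod.collapse)
    have le1: "a \<le> fst g" using L a unfolding Intv_def by auto
    have le2: "fst g \<le> snd g" using g unfolding Intv_def by auto
    have e: "lcomp poset_cat (g # rest) = (a, snd g)" using \<open>rest = h # gs\<close> a by (simp add: PC)
    have "lcomp (quot_cat R) (map (\<lambda>f. R `` {f}) (g # rest)) =
       Comp (quot_cat R) (R `` {(fst g, snd g)}) (R `` {(a, fst g)})"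
      using \<open>rest = h # gs\<close> ih a by simp
    also have "\<dots> = R `` {(a, snd g)}" using Comp_poset[OF le1 le2] .
    finally show ?thesis using e by simp
  qed
qed

lemma EX: "gs \<noteq> [] \<Longrightarrow> set gs \<subseteq> Mor (quot_cat R) \<Longrightarrow> chainC (quot_cat R) gs \<Longrightarrow> a \<le> b \<Longrightarrow>
   lcomp (quot_cat R) gs = R `` {(a, b)} \<Longrightarrow>
   \<exists>fs. set fs \<subseteq> Intv \<and> chainC poset_cat fs \<and> lcomp poset_cat fs = (a, b) \<and> map (\<lambda>f. R `` {f}) fs = gs"
proof (induction gs arbitrary: a b)
  case Nil then show ?case by simp
next
  case (Cons g rest)
  show ?case
  proof (cases rest)
    case Nil
    then show ?thesis using Cons.prems by (intro exI[of _ "[(a, b)]"]) (simp add: Intv_def)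
  next
    case (Cons h gs)
    have L: "lcomp (quot_cat R) rest \<in> Mor (quot_cat R) \<and>
        Cod (quot_cat R) (lcomp (quot_cat R) rest) = Cod (quot_cat R) (hd rest)"
      using lcompD[of rest] Cons.prems \<open>rest = h # gs\<close> by simp
    have ch: "Dom (quot_cat R) g = Cod (quot_cat R) (lcomp (quot_cat R) rest)"
      using Cons.prems \<open>rest = h # gs\<close> L by simp
    have g: "g \<in> Mor (quot_cat R)" using Cons.prems by simp
    obtain a' b' c' where w: "a' \<le> b'" "b' \<le> c'" "lcomp (quot_cat R) rest = R `` {(a', b')}"
      "g = R `` {(b', c')}" "Comp (quot_cat R) g (lcomp (quot_cat R) rest) = R `` {(a', c')}"
      using CompD[OF conjunct1[OF L] g ch] by blast
    have ac: "a' \<le> c'" using w order_trans by blast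
    have "R `` {(a', c')} = R `` {(a, b)}"
      using Cons.prems(5) \<open>rest = h # gs\<close> w(5) by simp
    then have r: "((a', c'), (a, b)) \<in> R" using cls_eq[OF ac Cons.prems(4)] by simp
    obtain t where t: "t \<in> {a'..c'} \<rightarrow>\<^sub>E {a..b}" "\<forall>c\<in>{a'..c'}. int_map R a b (t c) = int_map R a' c' c"
      using A2[OF r] by blast
    define c where "c = t b'"
    have cin: "c \<in> {a..b}" using t(1) w unfolding c_def by auto
    have im: "int_map R a b c = int_map R a' c' b'" using t(2) w unfolding c_def by auto
    have e1: "R `` {(a, c)} = lcomp (quot_cat R) rest" using im w(3) unfolding int_map_def by simp
    have e2: "R `` {(c, b)} = g" using im w(4) unfolding int_map_def by simp
    have ac2: "a \<le> c" "c \<le> b" using cin by auto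
    have "rest \<noteq> []" "set rest \<subseteq> Mor (quot_cat R)" "chainC (quot_cat R) rest"
      using Cons.prems \<open>rest = h # gs\<close> by auto
    then obtain fs where fs: "set fs \<subseteq> Intv" "chainC poset_cat fs" "lcomp poset_cat fs = (a, c)"
       "map (\<lambda>f. R `` {f}) fs = rest"
      using Cons.IH[OF _ _ _ ac2(1) e1[symmetric]] by blast
    obtain f1 fs1 where f1: "fs = f1 # fs1" using fs(4) \<open>rest = h # gs\<close> by (cases fs) auto
    have lp: "snd (lcomp poset_cat fs) = snd (hd fs)" using lcomp_P[of fs] fs f1 by simp
    have "snd f1 = c" using lp fs(3) f1 by simp
    then have "chainC poset_cat ((c, b) # fs)" using fs(2) f1 by (simp add: PC)
    moreover have "lcomp poset_cat ((c, b) # fs) = (a, b)" using f1 fs(3) by (simp add: PC)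
    moreover have "set ((c, b) # fs) \<subseteq> Intv" using fs(1) ac2 by (simp add: Intv_def)
    moreover have "map (\<lambda>f. R `` {f}) ((c, b) # fs) = g # rest" using e2 fs(4) by simp
    ultimately show ?thesis by (intro exI[of _ "(c, b) # fs"] conjI)
  qed
qed

lemma UN: "fs \<noteq> [] \<Longrightarrow> set fs \<subseteq> Intv \<Longrightarrow> chainC poset_cat fs \<Longrightarrow>
   set fs' \<subseteq> Intv \<Longrightarrow> chainC poset_cat fs' \<Longrightarrow> lcomp poset_cat fs = lcomp poset_cat fs' \<Longrightarrow>
   map (\<lambda>f. R `` {f}) fs = map (\<lambda>f. R `` {f}) fs' \<Longrightarrow> fs = fs'"
proof (induction fs arbitrary: fs')
  case Nil then show ?case by simp
next
  case (Cons f rest)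
  obtain f' rest' where fs': "fs' = f' # rest'" using Cons.prems(7) by (cases fs') auto
  have len: "length rest' = length rest" using Cons.prems(7) fs' map_eq_imp_length_eq by fastforce
  show ?case
  proof (cases rest)
    case Nil
    then have "rest' = []" using len by simp
    then show ?thesis using Nil Cons.prems(6) fs' by simp
  next
    case (Cons h gs)
    obtain h' gs' where r': "rest' = h' # gs'" using len \<open>rest = h # gs\<close> by (cases rest') auto
    have P1: "lcomp poset_cat rest \<in> Intv \<and> fst (lcomp poset_cat rest) = fst (last rest) \<and>
       snd (lcomp poset_cat rest) = snd (hd rest)"
      using lcomp_P[of rest] Cons.prems \<open>rest = h # gs\<close> by simp
    have P2: "lcomp poset_cat rest' \<in> Intv \<and> fst (lcomp poset_cat rest') = fst (last rest') \<and>
       snd (lcomp poset_cat rest') = snd (hd rest')"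
      using lcomp_P[of rest'] Cons.prems fs' r' by simp
    have ch1: "fst f = snd h" using Cons.prems \<open>rest = h # gs\<close> by (simp add: PC)
    have ch2: "fst f' = snd h'" using Cons.prems fs' r' by (simp add: PC)
    have e1: "lcomp poset_cat (f # rest) = (fst (lcomp poset_cat rest), snd f)"
      using \<open>rest = h # gs\<close> by (simp add: PC)
    have e2: "lcomp poset_cat fs' = (fst (lcomp poset_cat rest'), snd f')"
      using fs' r' by (simp add: PC)
    define a where "a = fst (lcomp poset_cat rest)"
    define b where "b = snd f"
    define c where "c = fst f"
    define c' where "c' = fst f'"
    have fa: "fst (lcomp poset_cat rest') = a" "snd f' = b" using e1 e2 Cons.prems(6) a_def b_def by auto
    have Lr: "lcomp poset_cat rest = (a, c)" using P1 ch1 a_def c_def \<open>rest = h # gs\<close> by (simp add: prod_eq_iff)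
    have Lr': "lcomp poset_cat rest' = (a, c')" using P2 ch2 fa c'_def r' by (simp add: prod_eq_iff)
    have f: "f = (c, b)" using b_def c_def by simp
    have f': "f' = (c', b)" using fa c'_def by (metis prod.collapse)
    have "R `` {f} = R `` {f'}" using Cons.prems(7) fs' by simp
    then have E1: "R `` {(c, b)} = R `` {(c', b)}" using f f' by simp
    have "R `` {lcomp poset_cat rest} = R `` {lcomp poset_cat rest'}"
      using Fm_list[of rest] Fm_list[of rest'] Cons.prems fs' r' \<open>rest = h # gs\<close> by simp
    then have E2: "R `` {(a, c)} = R `` {(a, c')}" using Lr Lr' by simp
    have i1: "a \<le> c" "c \<le> b" using P1 Lr f Cons.prems(2) unfolding Intv_def by auto
    have i2: "a \<le> c'" "c' \<le> b" using P2 Lr' f' Cons.prems(4) fs' unfolding Intv_def by auto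
    have cc: "c = c'" using L2[OF i1 i2 E2 E1] .
    have "rest = rest'"
      using Cons.IH[of rest'] Cons.prems fs' r' \<open>rest = h # gs\<close> Lr Lr' cc by simp
    then show ?thesis using f f' cc fs' by simp
  qed
qed

lemma FE: "length fs \<ge> 2 \<Longrightarrow> (\<forall>i. Suc i < length fs \<longrightarrow> fst (fs ! i) = snd (fs ! Suc i)) \<Longrightarrow>
  fact_equiv poset_cat fs fs"
proof -
  assume l: "length fs \<ge> 2" and ch: "\<forall>i. Suc i < length fs \<longrightarrow> fst (fs ! i) = snd (fs ! Suc i)"
  define hs where "hs = map (\<lambda>f. (fst f, fst f)) (butlast fs)"
  have lh: "length hs + 1 = length fs" using l unfolding hs_def by simp
  have hi: "\<And>i. i < length hs \<Longrightarrow> hs ! i = (fst (fs ! i), fst (fs ! i))"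
    unfolding hs_def by (simp add: nth_butlast)
  have A: "\<forall>i < length hs. cat_iso poset_cat (hs ! i) \<and> Cod poset_cat (hs ! i) = Dom poset_cat (fs ! i)"
    using hi by (simp add: iso_P PC Intv_def)
  have h0: "0 < length hs" using lh l by linarith
  have B: "fs ! 0 = Comp poset_cat (fs ! 0) (hs ! 0)" using hi[OF h0] by (simp add: PC)
  have C: "\<forall>i. 1 \<le> i \<and> i < length hs \<longrightarrow>
     fs ! i = Comp poset_cat (cat_inv poset_cat (hs ! (i - 1))) (Comp poset_cat (fs ! i) (hs ! i))"
  proof (intro allI impI)
    fix i assume i: "1 \<le> i \<and> i < length hs"
    then have "i - 1 < length hs" by linarith
    then have e: "hs ! (i - 1) = (fst (fs ! (i - 1)), fst (fs ! (i - 1)))" by (rule hi)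
    have "fst (fs ! (i - 1)) = snd (fs ! i)" using ch[rule_format, of "i - 1"] i lh by simp
    then show "fs ! i = Comp poset_cat (cat_inv poset_cat (hs ! (i - 1))) (Comp poset_cat (fs ! i) (hs ! i))"
      using e hi i by (simp add: PC inv_P)
  qed
  have D: "fs ! length hs = Comp poset_cat (cat_inv poset_cat (hs ! (length hs - 1))) (fs ! length hs)"
  proof -
    have "length hs - 1 < length hs" using h0 by linarith
    then have e: "hs ! (length hs - 1) = (fst (fs ! (length hs - 1)), fst (fs ! (length hs - 1)))" by (rule hi)
    have "fst (fs ! (length hs - 1)) = snd (fs ! length hs)" using ch[rule_format, of "length hs - 1"] h0 lh by simp
    then show ?thesis using e by (simp add: PC inv_P)
  qed
  show ?thesis unfolding fact_equiv_def using lh A B C D by blast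
qed

end

theorem proposition3p7:
  fixes \<rho> :: "'a::order \<Rightarrow> nat"
    and R :: "(('a \<times> 'a) \<times> ('a \<times> 'a)) set"
  assumes "graded_by \<rho>"
    and "reiner_stamate R"
  shows "almost_discrete_fibration (poset_cat :: ('a, 'a \<times> 'a) cat) (quot_cat R)
           (obj_cls R) (\<lambda>(a, b). R `` {(a, b)})
         \<and> (\<forall>q \<in> Mor (quot_cat R). \<exists>p \<in> Mor (poset_cat :: ('a, 'a \<times> 'a) cat).
              (\<lambda>(a, b). R `` {(a, b)}) p = q)"
proof -
  note RS = assms(2)
  have Fm_eq: "(\<lambda>(a, b). R `` {(a, b)}) = (\<lambda>f. R `` {f})" by auto
  have F: "is_functor (poset_cat :: ('a, 'a \<times> 'a) cat) (quot_cat R) (obj_cls R) (\<lambda>f. R `` {f})"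
    unfolding is_functor_def PC
  proof (intro conjI ballI allI impI)
    fix x :: 'a show "obj_cls R x \<in> Ob (quot_cat R)" by (simp add: quot_cat_def)
  next
    fix f :: "'a \<times> 'a" assume f: "f \<in> Intv"
    obtain a b where ab: "f = (a, b)" "a \<le> b" using f unfolding Intv_def by auto
    show "R `` {f} \<in> Mor (quot_cat R)" using MorD[OF RS] ab by blast
    show "Dom (quot_cat R) (R `` {f}) = obj_cls R (fst f)" using Dom_cls[OF RS ab(2)] ab by simp
    show "Cod (quot_cat R) (R `` {f}) = obj_cls R (snd f)" using Cod_cls[OF RS ab(2)] ab by simp
  next
    fix f g :: "'a \<times> 'a" assume f: "f \<in> Intv" and g: "g \<in> Intv" and fg: "fst g = snd f"
    obtain a b where ab: "f = (a, b)" "a \<le> b" using f unfolding Intv_def by auto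
    obtain c where bc: "g = (b, c)" "b \<le> c" using g fg ab unfolding Intv_def by (cases g) auto
    show "R `` {(fst f, snd g)} = Comp (quot_cat R) (R `` {g}) (R `` {f})"
      using Comp_poset[OF RS ab(2) bc(2)] ab bc by simp
  next
    fix x :: 'a show "R `` {(x, x)} = Id (quot_cat R) (obj_cls R x)" using IdL[OF RS] by simp
  qed
  have Fib: "\<forall>q\<in>Mor (quot_cat R). \<forall>p\<in>Mor (poset_cat :: ('a, 'a \<times> 'a) cat). R `` {p} = q \<longrightarrow>
        (\<forall>gs. is_factorization (quot_cat R) q gs \<and> nontrivial_fact (quot_cat R) gs \<longrightarrow>
           (\<exists>fs. is_factorization (poset_cat :: ('a, 'a \<times> 'a) cat) p fs \<and> nontrivial_fact (poset_cat :: ('a, 'a \<times> 'a) cat) fs \<and> map (\<lambda>f. R `` {f}) fs = gs) \<and>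
           (\<forall>fs fs'. is_factorization (poset_cat :: ('a, 'a \<times> 'a) cat) p fs \<and> nontrivial_fact (poset_cat :: ('a, 'a \<times> 'a) cat) fs \<and> map (\<lambda>f. R `` {f}) fs = gs \<and>
                     is_factorization (poset_cat :: ('a, 'a \<times> 'a) cat) p fs' \<and> nontrivial_fact (poset_cat :: ('a, 'a \<times> 'a) cat) fs' \<and> map (\<lambda>f. R `` {f}) fs' = gs \<longrightarrow>
                     fact_equiv (poset_cat :: ('a, 'a \<times> 'a) cat) fs fs'))"
  proof (intro ballI impI allI conjI)
    fix q p gs
    assume q: "q \<in> Mor (quot_cat R)" and p: "p \<in> Mor (poset_cat :: ('a, 'a \<times> 'a) cat)" and pq: "R `` {p} = q"
      and gs: "is_factorization (quot_cat R) q gs \<and> nontrivial_fact (quot_cat R) gs"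
    obtain a b where ab: "p = (a, b)" "a \<le> b" using p unfolding PC Intv_def by auto
    have g1: "length gs \<ge> 2" "set gs \<subseteq> Mor (quot_cat R)" "chainC (quot_cat R) gs"
      "lcomp (quot_cat R) gs = R `` {(a, b)}"
      using gs pq ab chain_iff[of gs "quot_cat R"] unfolding is_factorization_def by auto
    have gne: "gs \<noteq> []" using g1 by auto
    obtain fs where fs: "set fs \<subseteq> Intv" "chainC poset_cat fs" "lcomp poset_cat fs = (a, b)"
      "map (\<lambda>f. R `` {f}) fs = gs"
      using EX[OF RS gne g1(2) g1(3) ab(2) g1(4)] by blast
    have "is_factorization (poset_cat :: ('a, 'a \<times> 'a) cat) p fs"
      unfolding is_factorization_def using fs g1(1) ab chain_iff[of fs poset_cat] by (auto simp: PC)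
    moreover have "nontrivial_fact (poset_cat :: ('a, 'a \<times> 'a) cat) fs"
      unfolding nontrivial_fact_def
    proof
      fix f assume f: "f \<in> set fs"
      then have "R `` {f} \<in> set gs" using fs(4) by force
      then have "\<not> cat_iso (quot_cat R) (R `` {f})" using gs unfolding nontrivial_fact_def by blast
      then show "\<not> cat_iso poset_cat f" using noniso[OF RS] f fs(1) by blast
    qed
    ultimately show "\<exists>fs. is_factorization (poset_cat :: ('a, 'a \<times> 'a) cat) p fs \<and> nontrivial_fact (poset_cat :: ('a, 'a \<times> 'a) cat) fs \<and> map (\<lambda>f. R `` {f}) fs = gs"
      using fs(4) by blast
  next
    fix q p gs fs fs'
    assume q: "q \<in> Mor (quot_cat R)" and p: "p \<in> Mor (poset_cat :: ('a, 'a \<times> 'a) cat)" and pq: "R `` {p} = q"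
      and gs: "is_factorization (quot_cat R) q gs \<and> nontrivial_fact (quot_cat R) gs"
      and H: "is_factorization (poset_cat :: ('a, 'a \<times> 'a) cat) p fs \<and> nontrivial_fact (poset_cat :: ('a, 'a \<times> 'a) cat) fs \<and> map (\<lambda>f. R `` {f}) fs = gs \<and>
          is_factorization (poset_cat :: ('a, 'a \<times> 'a) cat) p fs' \<and> nontrivial_fact (poset_cat :: ('a, 'a \<times> 'a) cat) fs' \<and> map (\<lambda>f. R `` {f}) fs' = gs"
    have f1: "length fs \<ge> 2" "set fs \<subseteq> Intv" "chainC poset_cat fs" "lcomp poset_cat fs = p"
      "\<forall>i. Suc i < length fs \<longrightarrow> fst (fs ! i) = snd (fs ! Suc i)"
      using H chain_iff[of fs poset_cat] unfolding is_factorization_def by (auto simp: PC)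
    have f2: "set fs' \<subseteq> Intv" "chainC poset_cat fs'" "lcomp poset_cat fs' = p"
      using H chain_iff[of fs' poset_cat] unfolding is_factorization_def by (auto simp: PC)
    have "fs \<noteq> []" using f1 by auto
    then have "fs = fs'" using UN[OF RS _ f1(2) f1(3) f2(1) f2(2)] f1(4) f2(3) H by simp
    then show "fact_equiv (poset_cat :: ('a, 'a \<times> 'a) cat) fs fs'" using FE[OF RS f1(1) f1(5)] by simp
  qed
  have Lift: "\<forall>q \<in> Mor (quot_cat R). \<exists>p \<in> Mor (poset_cat :: ('a, 'a \<times> 'a) cat). R `` {p} = q"
  proof
    fix q assume "q \<in> Mor (quot_cat R)"
    then obtain a b where "a \<le> b" "q = R `` {(a, b)}" using MorD[OF RS] by blast
    then show "\<exists>p \<in> Mor (poset_cat :: ('a, 'a \<times> 'a) cat). R `` {p} = q"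
      by (intro bexI[of _ "(a, b)"]) (auto simp: PC Intv_def)
  qed
  show ?thesis unfolding Fm_eq almost_discrete_fibration_def using F Fib Lift by blast
qed

end
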